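(* Let $x\in\mathrm{SUBT}(K_n)$ be such that $G_x$ is 3-edge-connected and cubic, and let $\mathcal{C}\subseteq E_x$ be any 2-factor of $G_x$. Define $y\in\mathbb{R}^{E_n}$ by $y_e=\frac12$ for $e\in\mathcal{C}$, $y_e=1$ for $e\in E_x\setminus\mathcal{C}$, and $y_e=0$ otherwise. Then $y\in\mathrm{SUBT}(K_n)$.
   Context: $K_n$ is the complete graph on $V_n=\{1,\dots,n\}$ with edge set $E_n$; $\delta(U)$ denotes the set of edges with exactly one endpoint in $U$. $\mathrm{SUBT}(K_n)=\{x\in[0,1]^{E_n}: x(\delta(\{i\}))=2\ \forall i,\ x(\delta(U))\ge2\ \forall\,\emptyset\ne U\subsetneq V_n\}$. $G_x=(V_n,E_x)$ with $E_x=\{e:x_e>0\}$. A 2-factor is a spanning subgraph in which every vertex has degree exactly 2. *)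

theory Defs
  imports "HOL-Analysis.Analysis"
begin

definition Vn :: "nat \<Rightarrow> nat set" where
  "Vn n = {1..n}"

definition En :: "nat \<Rightarrow> nat set set" where
  "En n = {e. e \<subseteq> Vn n \<and> card e = 2}"

definition delta :: "nat \<Rightarrow> nat set \<Rightarrow> nat set set" where
  "delta n U = {e \<in> En n. card (e \<inter> U) = 1}"

definition xsum :: "(nat set \<Rightarrow> real) \<Rightarrow> nat set set \<Rightarrow> real" where
  "xsum x F = (\<Sum>e\<in>F. x e)"

text \<open>SUBT(K_n): points of [0,1]^{E_n} (coordinates outside E_n are required to be 0,
  so the vector is determined by its values on E_n).\<close>
definition SUBT :: "nat \<Rightarrow> (nat set \<Rightarrow> real) set" where
  "SUBT n = {x. (\<forall>e. e \<notin> En n \<longrightarrow> x e = 0)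
              \<and> (\<forall>e \<in> En n. 0 \<le> x e \<and> x e \<le> 1)
              \<and> (\<forall>i \<in> Vn n. xsum x (delta n {i}) = 2)
              \<and> (\<forall>U. U \<noteq> {} \<and> U \<subset> Vn n \<longrightarrow> xsum x (delta n U) \<ge> 2)}"

definition supp :: "nat \<Rightarrow> (nat set \<Rightarrow> real) \<Rightarrow> nat set set" where
  "supp n x = {e \<in> En n. x e > 0}"

definition deg :: "nat set set \<Rightarrow> nat \<Rightarrow> nat" where
  "deg F v = card {e \<in> F. v \<in> e}"

definition connected_graph :: "nat set \<Rightarrow> nat set set \<Rightarrow> bool" where
  "connected_graph V F \<longleftrightarrow>
     (\<forall>u \<in> V. \<forall>v \<in> V. (u, v) \<in> {(a, b). {a, b} \<in> F}\<^sup>*)"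

definition k_edge_connected :: "nat \<Rightarrow> nat set \<Rightarrow> nat set set \<Rightarrow> bool" where
  "k_edge_connected k V F \<longleftrightarrow>
     (\<forall>D \<subseteq> F. card D < k \<longrightarrow> connected_graph V (F - D))"

definition cubic :: "nat set \<Rightarrow> nat set set \<Rightarrow> bool" where
  "cubic V F \<longleftrightarrow> (\<forall>v \<in> V. deg F v = 3)"

definition two_factor :: "nat set \<Rightarrow> nat set set \<Rightarrow> nat set set \<Rightarrow> bool" where
  "two_factor V F C \<longleftrightarrow> C \<subseteq> F \<and> (\<forall>v \<in> V. deg C v = 2)"

end

theory Submission
  imports Defs
begin

lemma finite_En: "finite (En n)"
proof -
  have "En n \<subseteq> Pow (Vn n)" unfolding En_def by auto
  moreover have "finite (Pow (Vn n))" unfolding Vn_def by simp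
  ultimately show ?thesis by (rule finite_subset)
qed

lemma sum_ind: "finite F \<Longrightarrow> (\<Sum>e\<in>F. if e \<in> A then (a::real) else 0) = a * real (card (F \<inter> A))"
proof -
  assume f: "finite F"
  have "(\<Sum>e\<in>F. if e \<in> A then a else 0) = (\<Sum>e\<in>{e\<in>F. e \<in> A}. a)"
    using sum.inter_filter[OF f, of "\<lambda>_. a" "\<lambda>e. e \<in> A"] by simp
  also have "{e\<in>F. e \<in> A} = F \<inter> A" by auto
  finally show ?thesis by simp
qed

lemma y_sum:
  assumes "finite F" "C \<subseteq> S"
  shows "xsum (\<lambda>e. if e \<in> C then 1/2 else if e \<in> S then 1 else 0) F
       = (1/2) * real (card (F \<inter> C)) + real (card (F \<inter> (S - C)))"
proof -
  have "xsum (\<lambda>e. if e \<in> C then 1/2 else if e \<in> S then 1 else 0) F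
      = (\<Sum>e\<in>F. (if e \<in> C then 1/2 else 0) + (if e \<in> S - C then 1 else 0))"
    unfolding xsum_def by (rule sum.cong) (use assms in auto)
  also have "\<dots> = (\<Sum>e\<in>F. if e \<in> C then 1/2 else 0) + (\<Sum>e\<in>F. if e \<in> S - C then 1 else 0)"
    by (rule sum.distrib)
  also have "\<dots> = (1/2) * real (card (F \<inter> C)) + real (card (F \<inter> (S - C)))"
    using sum_ind[OF assms(1), of C "1/2"] sum_ind[OF assms(1), of "S - C" 1] by simp
  finally show ?thesis .
qed

lemma parity:
  assumes U: "finite U" and C: "finite C" and deg2: "\<forall>v\<in>U. deg C v = 2"
    and c2: "\<forall>e\<in>C. card e = 2"
  shows "even (card {e\<in>C. card (e \<inter> U) = 1})"
proof -
  have "(\<Sum>v\<in>U. deg C v) = (\<Sum>v\<in>U. \<Sum>e\<in>C. if v \<in> e then 1 else 0)"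
  proof (rule sum.cong)
    fix v assume "v \<in> U"
    have "deg C v = card {e\<in>C. v \<in> e}" unfolding deg_def ..
    also have "\<dots> = (\<Sum>e\<in>{e\<in>C. v \<in> e}. 1)" by simp
    also have "\<dots> = (\<Sum>e\<in>C. if v \<in> e then 1 else 0)"
      using sum.inter_filter[OF C, of "\<lambda>_. 1::nat" "\<lambda>e. v \<in> e"] by simp
    finally show "deg C v = (\<Sum>e\<in>C. if v \<in> e then 1 else 0)" .
  qed simp
  also have "\<dots> = (\<Sum>e\<in>C. \<Sum>v\<in>U. if v \<in> e then 1 else 0)" by (rule sum.swap)
  also have "\<dots> = (\<Sum>e\<in>C. card (e \<inter> U))"
  proof (rule sum.cong)
    fix e assume "e \<in> C"
    have "(\<Sum>v\<in>U. if v \<in> e then 1 else (0::nat)) = (\<Sum>v\<in>{v\<in>U. v \<in> e}. 1)"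
      using sum.inter_filter[OF U, of "\<lambda>_. 1::nat" "\<lambda>v. v \<in> e"] by simp
    also have "{v\<in>U. v \<in> e} = e \<inter> U" by auto
    finally show "(\<Sum>v\<in>U. if v \<in> e then 1 else (0::nat)) = card (e \<inter> U)" by simp
  qed simp
  also have "\<dots> = (\<Sum>e\<in>C. (if card (e \<inter> U) = 1 then 1 else 0) + 2 * (if card (e \<inter> U) = 2 then 1 else 0))"
  proof (rule sum.cong)
    fix e assume "e \<in> C"
    hence "card e = 2" using c2 by auto
    hence "finite e" by (metis card.infinite zero_neq_numeral)
    hence "card (e \<inter> U) \<le> 2" using \<open>card e = 2\<close> by (metis card_mono inf_le1)
    thus "card (e \<inter> U) = (if card (e \<inter> U) = 1 then 1 else 0) + 2 * (if card (e \<inter> U) = 2 then 1 else 0)"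
      by auto
  qed simp
  also have "\<dots> = (\<Sum>e\<in>C. if card (e \<inter> U) = 1 then 1 else 0) + 2 * (\<Sum>e\<in>C. if card (e \<inter> U) = 2 then 1 else 0)"
    by (simp add: sum.distrib sum_distrib_left)
  also have "(\<Sum>e\<in>C. if card (e \<inter> U) = 1 then 1 else (0::nat)) = card {e\<in>C. card (e \<inter> U) = 1}"
    using sum.inter_filter[OF C, of "\<lambda>_. 1::nat" "\<lambda>e. card (e \<inter> U) = 1"] by simp
  finally have eq: "(\<Sum>v\<in>U. deg C v) = card {e\<in>C. card (e \<inter> U) = 1} + 2 * (\<Sum>e\<in>C. if card (e \<inter> U) = 2 then 1 else 0)" .
  have "(\<Sum>v\<in>U. deg C v) = (\<Sum>v\<in>U. 2)" using deg2 by simp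
  hence "even (\<Sum>v\<in>U. deg C v)" by simp
  with eq show ?thesis by simp
qed

theorem mainTheorem7:
  fixes n :: nat and x :: "nat set \<Rightarrow> real" and C :: "nat set set"
  assumes "x \<in> SUBT n"
    and "k_edge_connected 3 (Vn n) (supp n x)"
    and "cubic (Vn n) (supp n x)"
    and "two_factor (Vn n) (supp n x) C"
  shows "(\<lambda>e. if e \<in> C then 1/2 else if e \<in> supp n x then 1 else 0) \<in> SUBT n"
proof -
  define S where "S = supp n x"
  define y where "y = (\<lambda>e. if e \<in> C then 1/2 else if e \<in> S then 1 else (0::real))"
  have SE: "S \<subseteq> En n" unfolding S_def supp_def by auto
  have CS: "C \<subseteq> S" using assms(4) unfolding two_factor_def S_def by auto
  have fS: "finite S" using SE finite_En finite_subset by blast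
  have fC: "finite C" using CS fS finite_subset by blast
  have degC: "\<forall>v\<in>Vn n. deg C v = 2" using assms(4) unfolding two_factor_def by auto
  have degS: "\<forall>v\<in>Vn n. deg S v = 3" using assms(3) unfolding cubic_def S_def by auto
  have fd: "finite (delta n U)" for U unfolding delta_def using finite_En by simp
  have c1: "\<forall>e. e \<notin> En n \<longrightarrow> y e = 0" using SE CS unfolding y_def by auto
  have c2: "\<forall>e \<in> En n. 0 \<le> y e \<and> y e \<le> 1" unfolding y_def by auto
  have c3: "\<forall>i \<in> Vn n. xsum y (delta n {i}) = 2"
  proof
    fix i assume i: "i \<in> Vn n"
    have dC: "delta n {i} \<inter> C = {e\<in>C. i \<in> e}"
      using CS SE unfolding delta_def by (auto simp: Int_insert_right split: if_splits)
    have dS: "delta n {i} \<inter> (S - C) = {e\<in>S. i \<in> e} - {e\<in>C. i \<in> e}"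
      using CS SE unfolding delta_def by (auto simp: Int_insert_right split: if_splits)
    have "card (delta n {i} \<inter> C) = 2" using dC degC i unfolding deg_def by auto
    moreover have "card (delta n {i} \<inter> (S - C)) = 1"
    proof -
      have "card ({e\<in>S. i \<in> e} - {e\<in>C. i \<in> e}) = card {e\<in>S. i \<in> e} - card {e\<in>C. i \<in> e}"
        by (rule card_Diff_subset) (use CS fC in auto)
      thus ?thesis using dS degC degS i unfolding deg_def by auto
    qed
    ultimately show "xsum y (delta n {i}) = 2"
      unfolding y_def using y_sum[OF fd CS] by simp
  qed
  have c4: "\<forall>U. U \<noteq> {} \<and> U \<subset> Vn n \<longrightarrow> xsum y (delta n U) \<ge> 2"
  proof (intro allI impI)
    fix U assume U: "U \<noteq> {} \<and> U \<subset> Vn n"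
    define D where "D = delta n U \<inter> S"
    have fU: "finite U" using U unfolding Vn_def using finite_subset by auto
    have k3: "card D \<ge> 3"
    proof (rule ccontr)
      assume "\<not> card D \<ge> 3"
      hence "card D < 3" by simp
      moreover have "D \<subseteq> S" unfolding D_def by auto
      ultimately have conn: "connected_graph (Vn n) (S - D)"
        using assms(2) unfolding k_edge_connected_def S_def by auto
      obtain u where u: "u \<in> U" using U by auto
      obtain v where v: "v \<in> Vn n" "v \<notin> U" using U by auto
      have uV: "u \<in> Vn n" using u U by auto
      have path: "(u, v) \<in> {(a, b). {a, b} \<in> S - D}\<^sup>*"
        using conn uV v unfolding connected_graph_def by auto
      have "v \<in> U" using path
      proof (induction rule: rtrancl_induct)
        case base then show ?case using u by simp
      next
        case (step a b)
        hence ab: "{a,b} \<in> S" "{a,b} \<notin> delta n U" "a \<in> U" unfolding D_def by auto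
        have E: "{a,b} \<in> En n" using ab SE by auto
        hence "card {a,b} = 2" unfolding En_def by auto
        hence "a \<noteq> b" by auto
        show "b \<in> U"
        proof (rule ccontr)
          assume "b \<notin> U"
          hence "{a,b} \<inter> U = {a}" using ab \<open>a \<noteq> b\<close> by auto
          hence "{a,b} \<in> delta n U" using E unfolding delta_def by auto
          with ab show False by simp
        qed
      qed
      with v show False by simp
    qed
    define c where "c = card (delta n U \<inter> C)"
    have "delta n U \<inter> C = {e\<in>C. card (e \<inter> U) = 1}"
      using CS SE unfolding delta_def by auto
    moreover have "\<forall>v\<in>U. deg C v = 2" using degC U by auto
    moreover have "\<forall>e\<in>C. card e = 2" using CS SE unfolding En_def by auto
    ultimately have ev: "even c" unfolding c_def using parity[OF fU fC] by simp
    have "delta n U \<inter> (S - C) = D - (delta n U \<inter> C)" unfolding D_def using CS by auto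
    hence "card (delta n U \<inter> (S - C)) = card D - c"
      unfolding c_def by (metis D_def CS Int_mono card_Diff_subset fd finite_Int order_refl)
    moreover have "c \<le> card D" unfolding c_def D_def
      by (rule card_mono) (use fd CS in auto)
    ultimately have "xsum y (delta n U) = (1/2) * real c + real (card D - c)"
      unfolding y_def using y_sum[OF fd CS] c_def by simp
    moreover obtain t where t: "c = 2 * t" using ev by auto
    moreover have "card D - c + t \<ge> 2" using k3 t \<open>c \<le> card D\<close> by presburger
    hence "real (card D - c) + real t \<ge> 2" by linarith
    ultimately show "xsum y (delta n U) \<ge> 2" by simp
  qed
  show ?thesis unfolding SUBT_def using c1 c2 c3 c4 unfolding y_def S_def by blast
qed

end
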